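(* For every positive integer $d$, there exists a binary matrix $M$ such that $R_{bool}(M)=4d$ and $R_{\mathbb{R}}(M)=3d$.
   Context: $R_{\mathbb{R}}$ is the usual rank over the reals. For a binary $n\times m$ matrix $M$, the boolean rank $R_{bool}(M)$ is the least $k$ such that $M=UV$ with $U\in\{0,1\}^{n\times k}$, $V\in\{0,1\}^{k\times m}$, where the product is computed in the Boolean semiring ($1+1=1$), equivalently the minimum number of all-ones combinatorial rectangles (submatrices) needed to cover the $1$-entries of $M$. *)

theory Defs
  imports "Jordan_Normal_Form.DL_Rank"
begin

definition binary_mat :: "real mat \<Rightarrow> bool" where
  "binary_mat M \<longleftrightarrow> (\<forall>i<dim_row M. \<forall>j<dim_col M. M $$ (i,j) = 0 \<or> M $$ (i,j) = 1)"

definition real_rank :: "real mat \<Rightarrow> nat" where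
  "real_rank M = vec_space.rank (dim_row M) M"

definition bool_rank :: "real mat \<Rightarrow> nat" where
  "bool_rank M = (LEAST k. \<exists>U V :: nat \<Rightarrow> nat \<Rightarrow> bool.
      \<forall>i<dim_row M. \<forall>j<dim_col M. (M $$ (i,j) = 1 \<longleftrightarrow> (\<exists>l<k. U i l \<and> V l j)))"

end

theory Submission imports Defs "Jordan_Normal_Form.DL_Rank_Submatrix" begin

lemma (in vec_space) rank_le_card_spanning:
  assumes A: "A \<in> carrier_mat n nc" and W: "W \<subseteq> set (cols A)"
    and S: "set (cols A) \<subseteq> span W"
  shows "rank A \<le> card W"
proof -
  have C: "set (cols A) \<subseteq> carrier_vec n" using A cols_dim by blast
  have WC: "W \<subseteq> carrier_vec n" using C W by blast
  have fW: "finite W" using W finite_subset by blast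
  have "span (set (cols A)) \<subseteq> span W"
    using span_is_subset[OF S span_is_submodule] WC by auto
  moreover have "span W \<subseteq> span (set (cols A))" using span_is_monotone[OF W] .
  ultimately have eq: "span (set (cols A)) = span W" by blast
  obtain U where U: "maximal U (\<lambda>T. T \<subseteq> W \<and> lin_indpt T)"
    using maximal_exists[of "(\<lambda>T. T \<subseteq> W \<and> lin_indpt T)" "card W" "{}"]
    by (meson fW card_mono empty_iff empty_subsetI finite_lin_indpt2 rev_finite_subset)
  have "rank A = vectorspace.dim class_ring (span_vs W)"
    unfolding rank_def eq ..
  also have "\<dots> = card U" using dim_span[OF WC fW U] .
  also have "\<dots> \<le> card W" using U fW by (simp add: card_mono maximal_def)
  finally show ?thesis .
qed


definition blk :: "nat \<Rightarrow> nat \<Rightarrow> nat" where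
  "blk d i = (if i < 3*d then i div 3 else i - 3*d)"
definition loc :: "nat \<Rightarrow> nat \<Rightarrow> nat" where
  "loc d i = (if i < 3*d then i mod 3 else 3)"
definition rel :: "nat \<Rightarrow> nat \<Rightarrow> nat \<Rightarrow> bool" where
  "rel d i j = (blk d i = blk d j \<and> (loc d j = loc d i \<or> loc d j = Suc (loc d i) mod 4))"
definition Mx :: "nat \<Rightarrow> real mat" where
  "Mx d = mat (4*d) (4*d) (\<lambda>(i,j). if rel d i j then 1 else 0)"

lemma Mx_carrier: "Mx d \<in> carrier_mat (4*d) (4*d)" by (simp add: Mx_def)

lemma Mx_idx: "i < 4*d \<Longrightarrow> j < 4*d \<Longrightarrow> Mx d $$ (i,j) = (if rel d i j then 1 else 0)"
  by (simp add: Mx_def)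

lemma binary: "binary_mat (Mx d)"
  unfolding binary_mat_def by (simp add: Mx_def)

lemma loc_lt: "loc d i < 4" unfolding loc_def by auto

lemma inj_bl: "i < 4*d \<Longrightarrow> j < 4*d \<Longrightarrow> blk d i = blk d j \<Longrightarrow> loc d i = loc d j \<Longrightarrow> i = j"
  unfolding blk_def loc_def by (auto split: if_splits) (metis div_mod_decomp)

lemma fooling: "i < 4*d \<Longrightarrow> j < 4*d \<Longrightarrow> i \<noteq> j \<Longrightarrow> rel d i j \<Longrightarrow> rel d j i \<Longrightarrow> False"
proof -
  assume a: "i < 4*d" "j < 4*d" "i \<noteq> j" "rel d i j" "rel d j i"
  have b: "blk d i = blk d j" using a(4) by (simp add: rel_def)
  hence "loc d i \<noteq> loc d j" using inj_bl a by blast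
  hence "loc d j = Suc (loc d i) mod 4" "loc d i = Suc (loc d j) mod 4" using a(4,5) by (auto simp: rel_def)
  thus False using loc_lt[of d i] loc_lt[of d j] by presburger
qed

lemma bool_rank_Mx: "bool_rank (Mx d) = 4*d"
  unfolding bool_rank_def
proof (rule Least_equality)
  show "\<exists>U V :: nat \<Rightarrow> nat \<Rightarrow> bool. \<forall>i<dim_row (Mx d). \<forall>j<dim_col (Mx d).
      (Mx d $$ (i,j) = 1 \<longleftrightarrow> (\<exists>l<4*d. U i l \<and> V l j))"
    by (rule exI[of _ "\<lambda>i l. i = l"], rule exI[of _ "\<lambda>l j. Mx d $$ (l,j) = 1"]) (auto simp: Mx_def)
next
  fix k assume "\<exists>U V :: nat \<Rightarrow> nat \<Rightarrow> bool. \<forall>i<dim_row (Mx d). \<forall>j<dim_col (Mx d).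
      (Mx d $$ (i,j) = 1 \<longleftrightarrow> (\<exists>l<k. U i l \<and> V l j))"
  then obtain U V :: "nat \<Rightarrow> nat \<Rightarrow> bool" where UV: "\<And>i j. i < 4*d \<Longrightarrow> j < 4*d \<Longrightarrow>
      (Mx d $$ (i,j) = 1 \<longleftrightarrow> (\<exists>l<k. U i l \<and> V l j))" by (auto simp: Mx_def)
  have diag: "\<exists>l<k. U i l \<and> V l i" if "i < 4*d" for i
    using UV[OF that that] that by (simp add: Mx_idx rel_def)
  define f where "f i = (SOME l. l<k \<and> U i l \<and> V l i)" for i
  have f: "f i < k \<and> U i (f i) \<and> V (f i) i" if "i < 4*d" for i
    unfolding f_def using someI_ex[OF diag[OF that]] .
  have "inj_on f {..<4*d}"
  proof (rule inj_onI, rule ccontr)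
    fix i j assume ij: "i \<in> {..<4*d}" "j \<in> {..<4*d}" "f i = f j" "i \<noteq> j"
    have "Mx d $$ (i,j) = 1" using UV[of i j] f[of i] f[of j] ij by auto
    hence "rel d i j" using ij by (simp add: Mx_idx split: if_splits)
    have "Mx d $$ (j,i) = 1" using UV[of j i] f[of i] f[of j] ij by auto
    hence "rel d j i" using ij by (simp add: Mx_idx split: if_splits)
    show False using fooling ij \<open>rel d i j\<close> \<open>rel d j i\<close> by blast
  qed
  moreover have "f ` {..<4*d} \<subseteq> {..<k}" using f by auto
  ultimately show "4*d \<le> k" using card_inj_on_le[of f "{..<4*d}" "{..<k}"] by simp
qed


lemma blk_loc_hi: "k < d \<Longrightarrow> blk d (3*d+k) = k \<and> loc d (3*d+k) = 3"
  by (simp add: blk_def loc_def)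
lemma blk_loc_lo: "k < d \<Longrightarrow> t < 3 \<Longrightarrow> blk d (3*k+t) = k \<and> loc d (3*k+t) = t"
  by (simp add: blk_def loc_def)

lemma col_relation:
  assumes k: "k < d"
  shows "col (Mx d) (3*d+k) + col (Mx d) (3*k+1) = col (Mx d) (3*k) + col (Mx d) (3*k+2)"
proof (rule eq_vecI)
  show "dim_vec (col (Mx d) (3*d+k) + col (Mx d) (3*k+1)) = dim_vec (col (Mx d) (3*k) + col (Mx d) (3*k+2))"
    by (simp add: Mx_def)
  fix i assume "i < dim_vec (col (Mx d) (3*k) + col (Mx d) (3*k+2))"
  hence i: "i < 4*d" by (simp add: Mx_def)
  have r: "3*k+1 < 4*d" "3*k < 4*d" "3*k+2 < 4*d" "3*d+k < 4*d" using k by auto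
  have h: "blk d (3*d+k) = k" "loc d (3*d+k) = 3" using blk_loc_hi[OF k] by auto
  have h0: "blk d (3*k+0) = k" "loc d (3*k+0) = 0" using blk_loc_lo[OF k, of 0] by auto
  have h1: "blk d (3*k+1) = k" "loc d (3*k+1) = 1" using blk_loc_lo[OF k, of 1] by auto
  have h2: "blk d (3*k+2) = k" "loc d (3*k+2) = 2" using blk_loc_lo[OF k, of 2] by auto
  have lt: "loc d i < 4" by (rule loc_lt)
  show "(col (Mx d) (3*d+k) + col (Mx d) (3*k+1)) $ i = (col (Mx d) (3*k) + col (Mx d) (3*k+2)) $ i"
    using i r h h0 h1 h2 lt by (simp add: Mx_def rel_def) (cases "loc d i"; cases "loc d i - 1"; cases "loc d i - 2"; auto)
qed


lemma rank_upper: "vec_space.rank (4*d) (Mx d) \<le> 3*d"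
proof -
  interpret vs: vec_space "TYPE(real)" "4*d" .
  define W where "W = col (Mx d) ` {..<3*d}"
  have W: "W \<subseteq> set (cols (Mx d))" unfolding W_def by (auto simp: Mx_def cols_def)
  have C: "set (cols (Mx d)) \<subseteq> carrier_vec (4*d)" using cols_dim[of "Mx d"] by (simp add: Mx_def)
  have WC: "W \<subseteq> carrier_vec (4*d)" using W C by blast
  have S: "set (cols (Mx d)) \<subseteq> vs.span W"
  proof
    fix v assume "v \<in> set (cols (Mx d))"
    then obtain j where j: "j < 4*d" "v = col (Mx d) j" by (auto simp: cols_def Mx_def)
    show "v \<in> vs.span W"
    proof (cases "j < 3*d")
      case True
      hence "v \<in> W" using j W_def by auto
      thus ?thesis using vs.in_own_span[OF WC] by auto
    next
      case False
      define k where "k = j - 3*d"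
      have k: "k < d" "j = 3*d+k" using False j k_def by auto
      have in1: "col (Mx d) (3*k+1) \<in> vs.span W"
        using vs.in_own_span[OF WC] k unfolding W_def by auto
      have s: "col (Mx d) (3*k) + col (Mx d) (3*k+2) \<in> vs.span W"
      proof -
        have a: "col (Mx d) (3*k) \<in> vs.span W" "col (Mx d) (3*k+2) \<in> vs.span W"
          using vs.in_own_span[OF WC] k unfolding W_def by auto
        show ?thesis using vs.span_add1[OF WC a] by simp
      qed
      have vc: "v \<in> carrier_vec (4*d)" using j by (simp add: Mx_def)
      have "col (Mx d) (3*k+1) + v \<in> vs.span W"
      proof -
        have "col (Mx d) (3*k+1) + v = v + col (Mx d) (3*k+1)"
          by (rule comm_add_vec[of _ "4*d"]) (use vc k in \<open>auto simp: Mx_def\<close>)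
        thus ?thesis using col_relation[OF k(1)] s k j by simp
      qed
      thus ?thesis using vs.span_add[OF WC in1 vc] by simp
    qed
  qed
  have "vs.rank (Mx d) \<le> card W" by (rule vs.rank_le_card_spanning[OF Mx_carrier W S])
  also have "card W \<le> 3*d" unfolding W_def using card_image_le[of "{..<3*d}" "col (Mx d)"] by simp
  finally show ?thesis .
qed


lemma pick_lt: "i < m \<Longrightarrow> pick {..<m} i = i"
proof -
  assume "i < m"
  have "{a \<in> {..<m}. a < i} = {..<i}" using \<open>i<m\<close> by auto
  thus ?thesis using pick_card_in_set[of i "{..<m}"] \<open>i<m\<close> by simp
qed

lemma aux: "(a::nat) < 3 \<Longrightarrow> b < 3 \<Longrightarrow> 3*q + b < 3*q + a \<Longrightarrow> b = a \<or> b = Suc a mod 4 \<Longrightarrow> False"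
proof -
  assume "a < 3" "b < 3" "3*q + b < 3*q + a" "b = a \<or> b = Suc a mod 4"
  moreover have "a < 3 \<Longrightarrow> Suc a mod 4 = Suc a" by simp
  ultimately show False by auto
qed

lemma rank_lower: "3*d \<le> vec_space.rank (4*d) (Mx d)"
proof -
  let ?I = "{..<3*d}"
  define S where "S = submatrix (Mx d) ?I ?I"
  have cI: "card {i. i < 4*d \<and> i \<in> ?I} = 3*d"
  proof -
    have "{i. i < 4*d \<and> i \<in> ?I} = {..<3*d}" by auto
    thus ?thesis by simp
  qed
  have Sc: "S \<in> carrier_mat (3*d) (3*d)" unfolding S_def
    by (rule carrier_matI) (use cI in \<open>simp_all add: dim_submatrix Mx_carrier[THEN carrier_matD(1)] Mx_carrier[THEN carrier_matD(2)]\<close>)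
  have Se: "S $$ (i,j) = (if rel d i j then 1 else 0)" if "i < 3*d" "j < 3*d" for i j
  proof -
    have "S $$ (i,j) = Mx d $$ (pick ?I i, pick ?I j)" unfolding S_def
      by (rule submatrix_index) (use that cI in \<open>simp_all add: Mx_def\<close>)
    thus ?thesis using that by (simp add: pick_lt Mx_idx)
  qed
  have ut: "upper_triangular S"
    unfolding upper_triangular_def
  proof (intro allI impI)
    fix i j assume "i < dim_row S" "j < i"
    hence ij: "i < 3*d" "j < 3*d" "j < i" using Sc by auto
    have "\<not> rel d i j"
    proof
      assume "rel d i j"
      hence "i div 3 = j div 3" "j mod 3 = i mod 3 \<or> j mod 3 = Suc (i mod 3) mod 4"
        using ij by (auto simp: rel_def blk_def loc_def)
      moreover have "i = 3*(i div 3) + i mod 3" "j = 3*(j div 3) + j mod 3" by simp_all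
      moreover have "i mod 3 < 3" "j mod 3 < 3" by simp_all
      ultimately show False using ij(3) aux[of "i mod 3" "j mod 3" "i div 3"] by simp
    qed
    thus "S $$ (i,j) = 0" using Se ij by simp
  qed
  have "det S = prod_list (diag_mat S)" by (rule det_upper_triangular[OF ut Sc])
  also have "diag_mat S = replicate (3*d) 1"
    by (rule nth_equalityI) (use Sc Se in \<open>auto simp: diag_mat_def rel_def\<close>)
  finally have "det S \<noteq> 0" by simp
  hence "card {j. j < 4*d \<and> j \<in> ?I} \<le> vec_space.rank (4*d) (Mx d)"
    using vec_space.rank_gt_minor[OF Mx_carrier] unfolding S_def by blast
  thus ?thesis using cI by simp
qed

theorem theorem4:
  fixes d :: nat
  assumes "d > 0"
  shows "\<exists>M :: real mat. binary_mat M \<and> bool_rank M = 4 * d \<and> real_rank M = 3 * d"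
proof (intro exI conjI)
  show "binary_mat (Mx d)" by (rule binary)
  show "bool_rank (Mx d) = 4 * d" by (rule bool_rank_Mx)
  have "dim_row (Mx d) = 4*d" by (simp add: Mx_def)
  thus "real_rank (Mx d) = 3 * d" unfolding real_rank_def
    using rank_upper[of d] rank_lower[of d] by simp
qed

end
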